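(* Fix $N\in\mathbb{N}$, a particle density parameter $\rho$, and let $\mathcal{E}\subset\mathbb{R}$ be the set of possible energy densities. For each $\varepsilon\in\mathcal{E}$ let $\mu_{\mathrm{MC}}^{\varepsilon,\rho;N}$ be a permutation invariant probability measure on $\mathbb{R}^N$ (the microcanonical ensemble) supported on $\{\phi: H[\phi]=\varepsilon N\}$, for a measurable energy function $H:\mathbb{R}^N\to\mathbb{R}$, and let $Z_{\mathrm{MC}}(\varepsilon,\rho;N)\ge0$ be weights. For $\beta\in\mathbb{R}$ with $0<\int d\varepsilon\,e^{-N\beta\varepsilon}Z_{\mathrm{MC}}(\varepsilon,\rho;N)<\infty$, define the canonical ensemble by \[ \langle g\rangle_{\mathrm{C}}^{\beta,\rho;N}=\frac{\int d\varepsilon'\,e^{-N\beta\varepsilon'}Z_{\mathrm{MC}}(\varepsilon',\rho;N)\langle g\rangle_{\mathrm{MC}}^{\varepsilon',\rho;N}}{\int d\varepsilon'\,e^{-N\beta\varepsilon'}Z_{\mathrm{MC}}(\varepsilon',\rho;N)}. \] Assume that for the given $\varepsilon\in\mathcal{E}$ there is a constant $C(\varepsilon,\rho)>0$, independent of $N$ and of $\varepsilon'$, such that for some $p\ge1$ and all $\varepsilon'\in\mathcal{E}$, $w_p(\mu_{\mathrm{MC}}^{\varepsilon,\rho;N},\mu_{\mathrm{MC}}^{\varepsilon',\rho;N};N)\le C(\varepsilon,\rho)|\varepsilon-\varepsilon'|$. Suppose also that the microcanonical and canonical measures have finite $p$:th moments. Fix $n<\infty$ and let $I\subset[N]$ with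 $|I|=n$, and let $f:\mathbb{R}^{|I|}\to\mathbb{R}$ be a bounded $1$-Lipschitz function with respect to $\|\cdot\|_p$. Then \[ \left|\langle f\circ P_I\rangle_{\mathrm{MC}}^{\varepsilon,\rho;N}-\langle f\circ P_I\rangle_{\mathrm{C}}^{\beta,\rho;N}\right|\le C(\varepsilon,\rho)\left(\frac{|I|}{1-\frac{|I|}{N}}\right)^{1/p}\left(\sigma_{\mathrm{C}}^{\beta,\rho;N}\!\left(\frac HN\right)+\left|\varepsilon-\frac{\langle H\rangle_{\mathrm{C}}^{\beta,\rho;N}}{N}\right|\right), \] where $\sigma_{\mathrm{C}}^{\beta,\rho;N}(H/N)=\sqrt{\big(\langle H^2\rangle_{\mathrm{C}}^{\beta,\rho;N}-(\langle H\rangle_{\mathrm{C}}^{\beta,\rho;N})^2\big)/N^2}$. Equivalently, with $f_{\mathrm{C}}(\beta,\rho;N)=-\frac1N\ln\int d\varepsilon'\,e^{-N\beta\varepsilon'}Z_{\mathrm{MC}}(\varepsilon',\rho;N)$, the right-hand side equals $C(\varepsilon,\rho)\left(\frac{|I|}{1-\frac{|I|}{N}}\right)^{1/p}\left(\frac1{\sqrt N}\sqrt{-\partial_\beta^2f_{\mathrm{C}}(\beta,\rho;N)}+|\varepsilon-\partial_\beta f_{\mathrm{C}}(\beta,\rho;N)|\right)$.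
   Context: Permutation invariance of a measure $\mu$ on $\mathbb{R}^N$: $\langle f\circ Q_\pi\rangle_\mu=\langle f\rangle_\mu$ for all integrable $f$ and permutations $\pi$ of $[N]=\{1,\dots,N\}$, where $(Q_\pi x)_j=x_{\pi^{-1}(j)}$. For $I\subset[N]$, $P_I:\mathbb{R}^N\to\mathbb{R}^{|I|}$ is the projection onto the coordinates in $I$ listed in increasing order. $w_p(\mu_1,\mu_2;N)=\left(\inf_\gamma\int\gamma(dx,dy)\frac1N\sum_{i=1}^N|x_i-y_i|^p\right)^{1/p}$ with the infimum over all couplings of $\mu_1,\mu_2$. *)

theory Defs
  imports "HOL-Probability.Probability" "HOL-Combinatorics.Permutations"
begin

text \<open>R^N with coordinates indexed by {..<N} (0-based re-indexing of [N]).\<close>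
definition Rn :: "nat \<Rightarrow> (nat \<Rightarrow> real) measure" where
  "Rn N = PiM {..<N} (\<lambda>_. borel)"

definition perm_coord :: "nat \<Rightarrow> (nat \<Rightarrow> nat) \<Rightarrow> (nat \<Rightarrow> real) \<Rightarrow> (nat \<Rightarrow> real)" where
  "perm_coord N \<pi> x = (\<lambda>j\<in>{..<N}. x (inv \<pi> j))"

definition perm_invariant :: "nat \<Rightarrow> (nat \<Rightarrow> real) measure \<Rightarrow> bool" where
  "perm_invariant N M \<longleftrightarrow>
     (\<forall>\<pi>. \<pi> permutes {..<N} \<longrightarrow>
        (\<forall>f :: (nat \<Rightarrow> real) \<Rightarrow> real. integrable M f \<longrightarrow>
            (\<integral>x. f (perm_coord N \<pi> x) \<partial>M) = (\<integral>x. f x \<partial>M)))"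

definition proj_coords :: "nat set \<Rightarrow> (nat \<Rightarrow> real) \<Rightarrow> (nat \<Rightarrow> real)" where
  "proj_coords I x = (\<lambda>k\<in>{..<card I}. x (sorted_list_of_set I ! k))"

definition lp_norm :: "real \<Rightarrow> nat \<Rightarrow> (nat \<Rightarrow> real) \<Rightarrow> real" where
  "lp_norm p n x = (\<Sum>k<n. \<bar>x k\<bar> powr p) powr (1 / p)"

definition couplings :: "'a measure \<Rightarrow> 'b measure \<Rightarrow> ('a \<times> 'b) measure set" where
  "couplings M1 M2 = {\<gamma>. sets \<gamma> = sets (M1 \<Otimes>\<^sub>M M2) \<and>
      distr \<gamma> M1 fst = M1 \<and> distr \<gamma> M2 snd = M2}"

definition wp_cost :: "real \<Rightarrow> nat \<Rightarrow> ((nat \<Rightarrow> real) \<times> (nat \<Rightarrow> real)) measure \<Rightarrow> ennreal" where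
  "wp_cost p N \<gamma> = (\<integral>\<^sup>+ z. ennreal ((1 / real N) * (\<Sum>i<N. \<bar>fst z i - snd z i\<bar> powr p)) \<partial>\<gamma>)"

definition wasserstein_p :: "real \<Rightarrow> (nat \<Rightarrow> real) measure \<Rightarrow> (nat \<Rightarrow> real) measure \<Rightarrow> nat \<Rightarrow> ennreal" where
  "wasserstein_p p M1 M2 N =
     (let c = (INF \<gamma>\<in>couplings M1 M2. wp_cost p N \<gamma>)
      in if c = \<top> then \<top> else ennreal (enn2real c powr (1 / p)))"

definition canon_weight :: "real \<Rightarrow> nat \<Rightarrow> (real \<Rightarrow> real) \<Rightarrow> real \<Rightarrow> real" where
  "canon_weight \<beta> N Z \<epsilon> = exp (- real N * \<beta> * \<epsilon>) * Z \<epsilon>"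

definition canon_partition :: "real set \<Rightarrow> real \<Rightarrow> nat \<Rightarrow> (real \<Rightarrow> real) \<Rightarrow> real" where
  "canon_partition E \<beta> N Z = (LINT \<epsilon>:E|lborel. canon_weight \<beta> N Z \<epsilon>)"

definition canon_exp :: "real set \<Rightarrow> real \<Rightarrow> nat \<Rightarrow> (real \<Rightarrow> real) \<Rightarrow> (real \<Rightarrow> (nat \<Rightarrow> real) measure)
    \<Rightarrow> ((nat \<Rightarrow> real) \<Rightarrow> real) \<Rightarrow> real" where
  "canon_exp E \<beta> N Z \<mu> g =
     (LINT \<epsilon>:E|lborel. canon_weight \<beta> N Z \<epsilon> * (\<integral>\<phi>. g \<phi> \<partial>\<mu> \<epsilon>)) / canon_partition E \<beta> N Z"

end

theory Submission
  imports Defs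
begin


lemma young_pt:
  fixes V s p :: real
  assumes "0 \<le> V" "0 < s" "1 \<le> p"
  shows "V powr (1/p) * s powr (1 - 1/p) \<le> V/p + (1 - 1/p) * s"
proof (cases "V = 0")
  case True then show ?thesis using assms by (simp add: field_simps)
next
  case False
  then have "V > 0" using assms by auto
  have "0 \<le> 1/p" "0 \<le> 1 - 1/p" using assms by (auto simp: field_simps)
  from Youngs_inequality_0[OF this _ \<open>V>0\<close> \<open>s>0\<close>] show ?thesis by (simp add: field_simps)
qed

lemma mod_shift_inj:
  fixes i i' k N :: nat
  assumes "i < N" "i' < N" "(i + k) mod N = (i' + k) mod N"
  shows "i = i'"
proof -
  have "N dvd (i' + k) - (i + k)" if "i \<le> i'" "(i + k) mod N = (i' + k) mod N" for i i'
    using that mod_eq_dvd_iff_nat[of "i + k" "i' + k" N] by auto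
  have A: "i = i'" if "i \<le> i'" "i' < N" "(i + k) mod N = (i' + k) mod N" for i i'
  proof -
    have "N dvd i' - i" using that mod_eq_dvd_iff_nat[of "i + k" "i' + k" N] by auto
    moreover have "i' - i < N" using that by auto
    ultimately have "i' - i = 0" using dvd_imp_le by fastforce
    then show ?thesis using that by auto
  qed
  show ?thesis using A[of i i'] A[of i' i] assms by (cases "i \<le> i'") auto
qed

lemma cyc_choose:
  fixes A :: "nat \<Rightarrow> real"
  assumes I: "I \<subseteq> {..<N}" and N: "0 < N"
  shows "\<exists>J \<subseteq> {..<N}. card J = card I \<and> (\<Sum>j\<in>J. A j) \<le> real (card I) / real N * (\<Sum>j<N. A j)"
proof (rule ccontr)
  assume contra: "\<not> ?thesis"
  define sh where "sh k i = (i + k) mod N" for k i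
  have inj: "inj_on (sh k) I" for k
  proof (rule inj_onI)
    fix i i' assume "i \<in> I" "i' \<in> I" "sh k i = sh k i'"
    then have "i < N" "i' < N" "(i + k) mod N = (i' + k) mod N" using I by (auto simp: sh_def)
    then show "i = i'"
      using mod_shift_inj by metis 
  qed
  have bij: "bij_betw (\<lambda>k. sh k i) {..<N} {..<N}" if "i < N" for i
  proof -
    have "inj_on (\<lambda>k. sh k i) {..<N}"
    proof (rule inj_onI)
      fix k k' assume "k \<in> {..<N}" "k' \<in> {..<N}" "sh k i = sh k' i"
      then have "k < N" "k' < N" "(k + i) mod N = (k' + i) mod N" by (auto simp: sh_def add.commute)
      then show "k = k'"
        using mod_shift_inj by metis 
    qed
    moreover have "(\<lambda>k. sh k i) ` {..<N} \<subseteq> {..<N}" using N by (auto simp: sh_def)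
    ultimately show ?thesis by (simp add: bij_betw_def endo_inj_surj)
  qed
  have J: "sh k ` I \<subseteq> {..<N}" "card (sh k ` I) = card I" for k
    using N card_image[OF inj[of k]] by (auto simp: sh_def)
  have lt: "real (card I) / real N * (\<Sum>j<N. A j) < (\<Sum>i\<in>I. A (sh k i))" if "k < N" for k
    using contra J[of k] sum.reindex[OF inj[of k], of A] by (auto simp: not_le)
  have "(\<Sum>k<N. real (card I) / real N * (\<Sum>j<N. A j)) < (\<Sum>k<N. \<Sum>i\<in>I. A (sh k i))"
    using N lt by (intro sum_strict_mono) auto
  also have "\<dots> = (\<Sum>i\<in>I. \<Sum>k<N. A (sh k i))" by (rule sum.swap)
  also have "\<dots> = (\<Sum>i\<in>I. \<Sum>j<N. A j)"
  proof (rule sum.cong)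
    fix i assume "i \<in> I" then have "i < N" using I by auto
    show "(\<Sum>k<N. A (sh k i)) = (\<Sum>j<N. A j)"
      using sum.reindex_bij_betw[OF bij[OF \<open>i<N\<close>], of A] by simp
  qed simp
  finally show False using N by simp
qed



lemma perm_exists:
  fixes N :: nat and I J :: "nat set"
  assumes I: "I \<subseteq> {..<N}" and J: "J \<subseteq> {..<N}" and c: "card J = card I"
  shows "\<exists>\<pi>. \<pi> permutes {..<N} \<and> (\<forall>k<card I. inv \<pi> (sorted_list_of_set I ! k) = sorted_list_of_set J ! k)"
proof -
  have fI: "finite I" by (rule finite_subset[OF I finite_lessThan])
  have fJ: "finite J" by (rule finite_subset[OF J finite_lessThan])
  define L1 where "L1 = sorted_list_of_set I @ sorted_list_of_set ({..<N} - I)"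
  define L2 where "L2 = sorted_list_of_set J @ sorted_list_of_set ({..<N} - J)"
  have d1: "distinct L1" and s1: "set L1 = {..<N}" using fI I by (auto simp: L1_def)
  have d2: "distinct L2" and s2: "set L2 = {..<N}" using fJ J by (auto simp: L2_def)
  have l1: "length L1 = N" using distinct_card[OF d1] s1 by simp
  have l2: "length L2 = N" using distinct_card[OF d2] s2 by simp
  have b1: "bij_betw ((!) L1) {..<N} {..<N}" using bij_betw_nth[OF d1] l1 s1 by simp
  have b2: "bij_betw ((!) L2) {..<N} {..<N}" using bij_betw_nth[OF d2] l2 s2 by simp
  define \<sigma> where "\<sigma> x = (if x < N then L2 ! (the_inv_into {..<N} ((!) L1) x) else x)" for x
  have "bij_betw ((!) L2 \<circ> the_inv_into {..<N} ((!) L1)) {..<N} {..<N}"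
    using bij_betw_trans[OF bij_betw_the_inv_into[OF b1] b2] .
  then have "bij_betw \<sigma> {..<N} {..<N}"
    by (rule bij_betw_cong[THEN iffD1, rotated]) (auto simp: \<sigma>_def)
  then have perm: "\<sigma> permutes {..<N}"
    by (rule bij_imp_permutes) (auto simp: \<sigma>_def)
  have key: "\<sigma> (sorted_list_of_set I ! k) = sorted_list_of_set J ! k" if "k < card I" for k
  proof -
    have k: "k < N" using that card_mono[OF _ I] by auto
    have e1: "L1 ! k = sorted_list_of_set I ! k" using that fI by (simp add: L1_def nth_append)
    have e2: "L2 ! k = sorted_list_of_set J ! k" using that fJ c by (simp add: L2_def nth_append)
    have "L1 ! k < N" using k l1 s1 nth_mem by fastforce
    moreover have "the_inv_into {..<N} ((!) L1) (L1 ! k) = k"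
      using the_inv_into_f_f[OF bij_betw_imp_inj_on[OF b1]] k by auto
    ultimately show ?thesis using e1 e2 by (simp add: \<sigma>_def)
  qed
  show ?thesis
  proof (intro exI conjI allI impI)
    show "inv \<sigma> permutes {..<N}" using perm by (rule permutes_inv)
    fix k assume "k < card I"
    then show "inv (inv \<sigma>) (sorted_list_of_set I ! k) = sorted_list_of_set J ! k"
      using key permutes_inv_inv[OF perm] by simp
  qed
qed

lemma proj_perm:
  fixes N :: nat and I J :: "nat set"
  assumes I: "I \<subseteq> {..<N}" and J: "J \<subseteq> {..<N}" and c: "card J = card I"
    and \<pi>: "\<forall>k<card I. inv \<pi> (sorted_list_of_set I ! k) = sorted_list_of_set J ! k"
  shows "proj_coords I (perm_coord N \<pi> x) = proj_coords J x"
proof -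
  have fI: "finite I" by (rule finite_subset[OF I finite_lessThan])
  have "sorted_list_of_set I ! k < N" if "k < card I" for k
    using that fI I nth_mem[of k "sorted_list_of_set I"] by auto
  then show ?thesis using \<pi> c by (auto simp: proj_coords_def perm_coord_def fun_eq_iff)
qed

lemma proj_meas: 
  assumes I: "I \<subseteq> {..<N}"
  shows "proj_coords I \<in> Rn N \<rightarrow>\<^sub>M Rn (card I)"
proof -
  have fI: "finite I" by (rule finite_subset[OF I finite_lessThan])
  have "sorted_list_of_set I ! k \<in> {..<N}" if "k < card I" for k
    using that fI I nth_mem[of k "sorted_list_of_set I"] by auto
  then show ?thesis unfolding proj_coords_def Rn_def
    by (intro measurable_restrict measurable_component_singleton) auto
qed

lemma proj_space: "proj_coords I x \<in> space (Rn (card I))"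
  by (simp add: proj_coords_def Rn_def space_PiM)

lemma sum_sorted:
  fixes J :: "nat set"
  assumes "finite J"
  shows "(\<Sum>k<card J. h (sorted_list_of_set J ! k)) = (\<Sum>j\<in>J. h j)"
proof -
  have "bij_betw ((!) (sorted_list_of_set J)) {..<card J} J"
    using bij_betw_nth[of "sorted_list_of_set J"] assms by simp
  from sum.reindex_bij_betw[OF this, of h] show ?thesis by simp
qed



lemma root_le_1V:
  fixes V p :: real assumes "0 \<le> V" "1 \<le> p"
  shows "V powr (1/p) \<le> 1 + V"
proof (cases "V \<le> 1")
  case True
  then have "V powr (1/p) \<le> 1" using assms powr_mono2[of "1/p" V 1] by simp
  then show ?thesis using assms by simp
next
  case False
  then have "V powr (1/p) \<le> V powr 1" using assms by (intro powr_mono) auto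
  then show ?thesis using False by simp
qed

lemma jensen_root:
  fixes V :: "'a \<Rightarrow> real"
  assumes P: "prob_space M" and Vi: "integrable M V" and V0: "\<And>x. x \<in> space M \<Longrightarrow> 0 \<le> V x"
    and p: "1 \<le> p"
  shows "integrable M (\<lambda>x. V x powr (1/p))" "(\<integral>x. V x powr (1/p) \<partial>M) \<le> (\<integral>x. V x \<partial>M) powr (1/p)"
proof -
  interpret prob_space M by (rule P)
  have Vm: "V \<in> borel_measurable M" using Vi by auto
  show ui: "integrable M (\<lambda>x. V x powr (1/p))"
  proof (rule Bochner_Integration.integrable_bound[of _ "\<lambda>x. 1 + V x"])
    show "integrable M (\<lambda>x. 1 + V x)" using Vi by auto
    show "(\<lambda>x. V x powr (1 / p)) \<in> borel_measurable M" using Vm by measurable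
    show "AE x in M. norm (V x powr (1 / p)) \<le> norm (1 + V x)"
      using V0 root_le_1V[OF _ p] by (auto intro!: AE_I2)
  qed
  have EV0: "0 \<le> (\<integral>x. V x \<partial>M)" using V0 by (simp add: integral_nonneg)
  show "(\<integral>x. V x powr (1/p) \<partial>M) \<le> (\<integral>x. V x \<partial>M) powr (1/p)"
  proof (cases "(\<integral>x. V x \<partial>M) = 0")
    case True
    then have "AE x in M. V x = 0" using integral_nonneg_eq_0_iff_AE[OF Vi] V0 by (auto intro!: AE_I2)
    then have "AE x in M. V x powr (1/p) = 0" by auto
    then have "(\<integral>x. V x powr (1/p) \<partial>M) = (\<integral>x. 0 \<partial>M)" using integral_cong_AE[of "\<lambda>x. V x powr (1/p)" M "\<lambda>x. 0"] Vm by auto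
    then show ?thesis using True by simp
  next
    case False
    define s where "s = (\<integral>x. V x \<partial>M)"
    have s: "0 < s" using False EV0 by (simp add: s_def)
    have "(\<integral>x. V x powr (1/p) \<partial>M) * s powr (1 - 1/p) = (\<integral>x. V x powr (1/p) * s powr (1 - 1/p) \<partial>M)"
      by simp
    also have "\<dots> \<le> (\<integral>x. V x / p + (1 - 1/p) * s \<partial>M)"
      using young_pt[OF _ s p] V0 ui Vi by (intro integral_mono) auto
    also have "\<dots> = s / p + (1 - 1/p) * s" using Vi prob_space by (simp add: s_def)
    also have "\<dots> = s" by (simp add: field_simps)
    finally have A: "(\<integral>x. V x powr (1/p) \<partial>M) * s powr (1 - 1/p) \<le> s" .
    have sp: "s = s powr (1/p) * s powr (1 - 1/p)" using s by (simp add: powr_add[symmetric])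
    have "0 < s powr (1 - 1/p)" using s by simp
    then have "(\<integral>x. V x powr (1/p) \<partial>M) \<le> s powr (1/p)"
      using A sp by (metis mult_le_cancel_right_pos)
    then show ?thesis by (simp add: s_def)
  qed
qed



lemma coupling_bound:
  fixes N :: nat and I :: "nat set" and f :: "(nat \<Rightarrow> real) \<Rightarrow> real" and p :: real
    and M1 M2 :: "(nat \<Rightarrow> real) measure"
  assumes N: "0 < N" and p: "1 \<le> p"
    and S1: "sets M1 = sets (Rn N)" and S2: "sets M2 = sets (Rn N)"
    and perm1: "perm_invariant N M1" and perm2: "perm_invariant N M2"
    and P1: "prob_space M1" and P2: "prob_space M2"
    and I: "I \<subseteq> {..<N}"
    and f_meas: "f \<in> borel_measurable (Rn (card I))"
    and B: "\<And>x. \<bar>f x\<bar> \<le> B"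
    and f_lip: "\<forall>x\<in>space (Rn (card I)). \<forall>y\<in>space (Rn (card I)).
                  \<bar>f x - f y\<bar> \<le> lp_norm p (card I) (\<lambda>k. x k - y k)"
    and \<gamma>: "\<gamma> \<in> couplings M1 M2" and fin: "wp_cost p N \<gamma> < \<top>"
  shows "\<bar>(\<integral>x. f (proj_coords I x) \<partial>M1) - (\<integral>x. f (proj_coords I x) \<partial>M2)\<bar> powr p
           \<le> real (card I) * enn2real (wp_cost p N \<gamma>)"
proof -
  let ?n = "card I"
  have s\<gamma>: "sets \<gamma> = sets (M1 \<Otimes>\<^sub>M M2)" and d1: "distr \<gamma> M1 fst = M1" and d2: "distr \<gamma> M2 snd = M2"
    using \<gamma> by (auto simp: couplings_def)
  have s\<gamma>': "sets \<gamma> = sets (Rn N \<Otimes>\<^sub>M Rn N)"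
    using s\<gamma> sets_pair_measure_cong[OF S1 S2] by simp
  have mfst: "fst \<in> \<gamma> \<rightarrow>\<^sub>M M1"
  proof -
    have "measurable \<gamma> M1 = measurable (M1 \<Otimes>\<^sub>M M2) M1" by (rule measurable_cong_sets) (simp_all add: s\<gamma>)
    then show ?thesis using measurable_fst by auto
  qed
  have msnd: "snd \<in> \<gamma> \<rightarrow>\<^sub>M M2"
  proof -
    have "measurable \<gamma> M2 = measurable (M1 \<Otimes>\<^sub>M M2) M2" by (rule measurable_cong_sets) (simp_all add: s\<gamma>)
    then show ?thesis using measurable_snd by auto
  qed
  have P\<gamma>: "prob_space \<gamma>"
  proof
    have "emeasure \<gamma> (space \<gamma>) = emeasure \<gamma> (fst -` space M1 \<inter> space \<gamma>)"
      using measurable_space[OF mfst] by (intro arg_cong[where f="emeasure \<gamma>"]) auto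
    also have "\<dots> = emeasure (distr \<gamma> M1 fst) (space M1)"
      using mfst by (simp add: emeasure_distr)
    also have "\<dots> = 1" using d1 P1 prob_space.emeasure_space_1 by simp
    finally show "emeasure \<gamma> (space \<gamma>) = 1" .
  qed
  interpret G: prob_space \<gamma> by (rule P\<gamma>)
  have mcomp: "(\<lambda>z. fst z j) \<in> borel_measurable \<gamma>" "(\<lambda>z. snd z j) \<in> borel_measurable \<gamma>" if "j < N" for j
  proof -
    have e: "borel_measurable \<gamma> = borel_measurable (Rn N \<Otimes>\<^sub>M Rn N)"
      by (rule measurable_cong_sets) (simp_all add: s\<gamma>')
    show "(\<lambda>z. fst z j) \<in> borel_measurable \<gamma>" "(\<lambda>z. snd z j) \<in> borel_measurable \<gamma>"
      unfolding e Rn_def using that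
      by (auto intro!: measurable_compose[OF measurable_fst measurable_component_singleton]
                       measurable_compose[OF measurable_snd measurable_component_singleton])
  qed
  define a :: "nat \<Rightarrow> (nat \<Rightarrow> real) \<times> (nat \<Rightarrow> real) \<Rightarrow> real" where "a j z = \<bar>fst z j - snd z j\<bar> powr p" for j z
  have am: "a j \<in> borel_measurable \<gamma>" if "j < N" for j
    unfolding a_def using mcomp[OF that] by measurable
  have a0: "0 \<le> a j z" for j z by (simp add: a_def)
  have Sm: "(\<lambda>z. \<Sum>j<N. a j z) \<in> borel_measurable \<gamma>"
    using am by (intro borel_measurable_sum) auto
  have S0: "0 \<le> (\<Sum>j<N. a j z)" for z using a0 by (simp add: sum_nonneg)
  have cost_eq: "wp_cost p N \<gamma> = (\<integral>\<^sup>+ z. ennreal ((1 / real N) * (\<Sum>j<N. a j z)) \<partial>\<gamma>)"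
    by (simp add: wp_cost_def a_def)
  have "(\<integral>\<^sup>+ z. ennreal (norm (\<Sum>j<N. a j z)) \<partial>\<gamma>) = (\<integral>\<^sup>+ z. ennreal (real N) * ennreal ((1 / real N) * (\<Sum>j<N. a j z)) \<partial>\<gamma>)"
    using N S0 by (intro nn_integral_cong) (simp add: ennreal_mult[symmetric])
  also have "\<dots> = ennreal (real N) * wp_cost p N \<gamma>"
    unfolding cost_eq using Sm by (intro nn_integral_cmult measurable_compose[OF _ measurable_ennreal] borel_measurable_times) auto
  also have "\<dots> < \<top>" using fin by (simp add: ennreal_mult_less_top)
  finally have Si: "integrable \<gamma> (\<lambda>z. \<Sum>j<N. a j z)"
    using Sm by (intro integrableI_bounded) (auto simp: top.not_eq_extremum)
  have ai: "integrable \<gamma> (a j)" if "j < N" for j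
  proof (rule Bochner_Integration.integrable_bound[OF Si am[OF that]])
    show "AE x in \<gamma>. norm (a j x) \<le> norm (\<Sum>j<N. a j x)"
      using that a0 by (intro AE_I2) (auto intro!: member_le_sum simp: S0)
  qed
  have "wp_cost p N \<gamma> = ennreal (\<integral>z. (1 / real N) * (\<Sum>j<N. a j z) \<partial>\<gamma>)"
    unfolding cost_eq using Si S0 by (intro nn_integral_eq_integral) auto
  moreover have "(\<integral>z. (1 / real N) * (\<Sum>j<N. a j z) \<partial>\<gamma>) = (1 / real N) * (\<Sum>j<N. \<integral>z. a j z \<partial>\<gamma>)"
    using ai by (simp add: Bochner_Integration.integral_sum)
  moreover have "0 \<le> (\<Sum>j<N. \<integral>z. a j z \<partial>\<gamma>)" using a0 by (intro sum_nonneg integral_nonneg) auto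
  ultimately have creal: "enn2real (wp_cost p N \<gamma>) = (1 / real N) * (\<Sum>j<N. \<integral>z. a j z \<partial>\<gamma>)"
    using N by (simp only:) simp
  obtain J where J: "J \<subseteq> {..<N}" "card J = ?n"
    and Jle: "(\<Sum>j\<in>J. \<integral>z. a j z \<partial>\<gamma>) \<le> real ?n / real N * (\<Sum>j<N. \<integral>z. a j z \<partial>\<gamma>)"
    using cyc_choose[OF I N, of "\<lambda>j. \<integral>z. a j z \<partial>\<gamma>"] by blast
  have Jle': "(\<Sum>j\<in>J. \<integral>z. a j z \<partial>\<gamma>) \<le> real ?n * enn2real (wp_cost p N \<gamma>)"
    using Jle by (simp add: creal)
  have fJ: "finite J" by (rule finite_subset[OF J(1) finite_lessThan])
  obtain \<pi> where \<pi>: "\<pi> permutes {..<N}" "\<forall>k<card I. inv \<pi> (sorted_list_of_set I ! k) = sorted_list_of_set J ! k"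
    using perm_exists[OF I J(1) J(2)] by blast
  define g where "g x = f (proj_coords I x)" for x
  define h where "h x = f (proj_coords J x)" for x
  have gh: "g (perm_coord N \<pi> x) = h x" for x
    unfolding g_def h_def using proj_perm[OF I J(1) J(2) \<pi>(2)] by simp
  have gmR: "g \<in> borel_measurable (Rn N)"
    unfolding g_def using measurable_compose[OF proj_meas[OF I] f_meas] .
  have hmR: "h \<in> borel_measurable (Rn N)"
    unfolding h_def using measurable_compose[OF proj_meas[OF J(1)], of f borel] f_meas J(2) by simp
  have B0: "0 \<le> B" using B[of undefined] by simp
  have gi: "integrable M g" if "sets M = sets (Rn N)" "prob_space M" for M
  proof -
    interpret prob_space M by fact
    have "g \<in> borel_measurable M" by (subst measurable_cong_sets[OF that(1) refl]) (rule gmR)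
    then show ?thesis using B by (intro integrable_const_bound[where B=B]) (auto simp: g_def)
  qed
  have hm: "h \<in> borel_measurable M" if "sets M = sets (Rn N)" for M
    by (subst measurable_cong_sets[OF that refl]) (rule hmR)
  have "(\<integral>x. g (perm_coord N \<pi> x) \<partial>M1) = (\<integral>x. g x \<partial>M1)"
    using perm1 \<pi>(1) gi[OF S1 P1] unfolding perm_invariant_def by blast
  then have eq1: "(\<integral>x. g x \<partial>M1) = (\<integral>x. h x \<partial>M1)" by (simp add: gh)
  have "(\<integral>x. g (perm_coord N \<pi> x) \<partial>M2) = (\<integral>x. g x \<partial>M2)"
    using perm2 \<pi>(1) gi[OF S2 P2] unfolding perm_invariant_def by blast
  then have eq2: "(\<integral>x. g x \<partial>M2) = (\<integral>x. h x \<partial>M2)" by (simp add: gh)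
  have eq1': "(\<integral>x. h x \<partial>M1) = (\<integral>z. h (fst z) \<partial>\<gamma>)"
  proof -
    have "(\<integral>x. h x \<partial>M1) = (\<integral>x. h x \<partial>(distr \<gamma> M1 fst))" using d1 by simp
    also have "\<dots> = (\<integral>z. h (fst z) \<partial>\<gamma>)" by (rule integral_distr[OF mfst hm[OF S1]])
    finally show ?thesis .
  qed
  have eq2': "(\<integral>x. h x \<partial>M2) = (\<integral>z. h (snd z) \<partial>\<gamma>)"
  proof -
    have "(\<integral>x. h x \<partial>M2) = (\<integral>x. h x \<partial>(distr \<gamma> M2 snd))" using d2 by simp
    also have "\<dots> = (\<integral>z. h (snd z) \<partial>\<gamma>)" by (rule integral_distr[OF msnd hm[OF S2]])
    finally show ?thesis .
  qed
  have h1i: "integrable \<gamma> (\<lambda>z. h (fst z))"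
    using measurable_compose[OF mfst hm[OF S1]] B by (intro G.integrable_const_bound[where B=B]) (auto simp: h_def)
  have h2i: "integrable \<gamma> (\<lambda>z. h (snd z))"
    using measurable_compose[OF msnd hm[OF S2]] B by (intro G.integrable_const_bound[where B=B]) (auto simp: h_def)
  define V where "V z = (\<Sum>j\<in>J. a j z)" for z
  have Vi: "integrable \<gamma> V" unfolding V_def by (rule Bochner_Integration.integrable_sum) (use ai J(1) in auto)
  have V0: "0 \<le> V z" for z unfolding V_def using a0 by (simp add: sum_nonneg)
  have pt: "\<bar>h (fst z) - h (snd z)\<bar> \<le> V z powr (1/p)" for z
  proof -
    have "\<bar>h (fst z) - h (snd z)\<bar> \<le> lp_norm p (card I) (\<lambda>k. proj_coords J (fst z) k - proj_coords J (snd z) k)"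
      using f_lip proj_space[of J] J(2) unfolding h_def by metis
    also have "\<dots> = V z powr (1/p)"
    proof -
      have "(\<Sum>k<card I. \<bar>proj_coords J (fst z) k - proj_coords J (snd z) k\<bar> powr p)
          = (\<Sum>k<card J. a (sorted_list_of_set J ! k) z)"
        using J(2) by (intro sum.cong) (auto simp: proj_coords_def a_def)
      also have "\<dots> = V z" unfolding V_def by (rule sum_sorted[OF fJ])
      finally show ?thesis by (simp add: lp_norm_def)
    qed
    finally show ?thesis .
  qed
  have jr: "integrable \<gamma> (\<lambda>z. V z powr (1/p))" "(\<integral>z. V z powr (1/p) \<partial>\<gamma>) \<le> (\<integral>z. V z \<partial>\<gamma>) powr (1/p)"
    using jensen_root[OF P\<gamma> Vi V0 p] by auto
  have EV: "(\<integral>z. V z \<partial>\<gamma>) = (\<Sum>j\<in>J. \<integral>z. a j z \<partial>\<gamma>)"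
    unfolding V_def by (rule Bochner_Integration.integral_sum) (use ai J(1) in auto)
  have "\<bar>(\<integral>x. g x \<partial>M1) - (\<integral>x. g x \<partial>M2)\<bar> = \<bar>\<integral>z. h (fst z) - h (snd z) \<partial>\<gamma>\<bar>"
    using eq1 eq2 eq1' eq2' h1i h2i by simp
  also have "\<dots> \<le> (\<integral>z. \<bar>h (fst z) - h (snd z)\<bar> \<partial>\<gamma>)"
    using integral_norm_bound[of \<gamma> "\<lambda>z. h (fst z) - h (snd z)"] by simp
  also have "\<dots> \<le> (\<integral>z. V z powr (1/p) \<partial>\<gamma>)"
    using h1i h2i jr(1) pt by (intro integral_mono) auto
  also have "\<dots> \<le> (real ?n * enn2real (wp_cost p N \<gamma>)) powr (1/p)"
  proof -
    have "0 \<le> (\<integral>z. V z \<partial>\<gamma>)" using V0 by (simp add: integral_nonneg)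
    then have "(\<integral>z. V z \<partial>\<gamma>) powr (1/p) \<le> (real ?n * enn2real (wp_cost p N \<gamma>)) powr (1/p)"
      using EV Jle' p by (intro powr_mono2) auto
    then show ?thesis using jr(2) by linarith
  qed
  finally have D: "\<bar>(\<integral>x. g x \<partial>M1) - (\<integral>x. g x \<partial>M2)\<bar> \<le> (real ?n * enn2real (wp_cost p N \<gamma>)) powr (1/p)" .
  have "\<bar>(\<integral>x. g x \<partial>M1) - (\<integral>x. g x \<partial>M2)\<bar> powr p \<le> ((real ?n * enn2real (wp_cost p N \<gamma>)) powr (1/p)) powr p"
    using D p by (intro powr_mono2) auto
  also have "\<dots> = real ?n * enn2real (wp_cost p N \<gamma>)"
    using p by (simp add: powr_powr)
  finally show ?thesis by (simp add: g_def)
qed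



lemma lemmaA:
  fixes N :: nat and I :: "nat set" and f :: "(nat \<Rightarrow> real) \<Rightarrow> real" and p W0 :: real
    and M1 M2 :: "(nat \<Rightarrow> real) measure"
  assumes N: "0 < N" and p: "1 \<le> p"
    and S1: "sets M1 = sets (Rn N)" and S2: "sets M2 = sets (Rn N)"
    and perm1: "perm_invariant N M1" and perm2: "perm_invariant N M2"
    and P1: "prob_space M1" and P2: "prob_space M2"
    and I: "I \<subseteq> {..<N}"
    and f_meas: "f \<in> borel_measurable (Rn (card I))"
    and B: "\<And>x. \<bar>f x\<bar> \<le> B"
    and f_lip: "\<forall>x\<in>space (Rn (card I)). \<forall>y\<in>space (Rn (card I)).
                  \<bar>f x - f y\<bar> \<le> lp_norm p (card I) (\<lambda>k. x k - y k)"
    and W: "wasserstein_p p M1 M2 N \<le> ennreal W0" and W0: "0 \<le> W0"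
  shows "\<bar>(\<integral>x. f (proj_coords I x) \<partial>M1) - (\<integral>x. f (proj_coords I x) \<partial>M2)\<bar>
           \<le> real (card I) powr (1/p) * W0"
proof -
  define D where "D = \<bar>(\<integral>x. f (proj_coords I x) \<partial>M1) - (\<integral>x. f (proj_coords I x) \<partial>M2)\<bar>"
  define c where "c = (INF \<gamma>\<in>couplings M1 M2. wp_cost p N \<gamma>)"
  define n where "n = real (card I)"
  have n0: "0 \<le> n" by (simp add: n_def)
  have ctop: "c \<noteq> \<top>"
  proof
    assume "c = \<top>"
    then have "wasserstein_p p M1 M2 N = \<top>" by (simp add: wasserstein_p_def c_def[symmetric])
    then show False using W by (simp add: top_unique)
  qed
  have "wasserstein_p p M1 M2 N = ennreal (enn2real c powr (1/p))"
    using ctop by (simp add: wasserstein_p_def c_def[symmetric])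
  then have cW: "enn2real c powr (1/p) \<le> W0" using W W0 by (simp add: ennreal_le_iff)
  define c' where "c' = enn2real c"
  have c'0: "0 \<le> c'" by (simp add: c'_def)
  have cc': "c = ennreal c'" using ctop by (simp add: c'_def ennreal_enn2real_if)
  have key: "D powr p \<le> n * (c' + \<delta>)" if "\<delta> > 0" for \<delta>
  proof -
    have "c < ennreal (c' + \<delta>)" using cc' that c'0 by (simp add: ennreal_less_iff)
    then obtain \<gamma> where \<gamma>: "\<gamma> \<in> couplings M1 M2" and lt: "wp_cost p N \<gamma> < ennreal (c' + \<delta>)"
      unfolding c_def by (auto simp: INF_less_iff)
    have fin: "wp_cost p N \<gamma> < \<top>" using lt less_le_trans by fastforce
    have "enn2real (wp_cost p N \<gamma>) \<le> c' + \<delta>"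
      using lt that c'0 fin by (metis enn2real_ennreal enn2real_mono less_imp_le ennreal_less_top add_nonneg_nonneg less_imp_le)
    moreover have "D powr p \<le> n * enn2real (wp_cost p N \<gamma>)"
      unfolding D_def n_def by (rule coupling_bound[OF N p S1 S2 perm1 perm2 P1 P2 I f_meas B f_lip \<gamma> fin])
    ultimately show ?thesis using n0 by (meson mult_left_mono order_trans)
  qed
  have Dp: "D powr p \<le> n * c'"
  proof (rule field_le_epsilon)
    fix e :: real assume e: "0 < e"
    have "D powr p \<le> n * (c' + e / (n + 1))" using key[of "e / (n+1)"] e n0 by simp
    also have "\<dots> = n * c' + e * (n / (n + 1))" by (simp add: field_simps)
    also have "\<dots> \<le> n * c' + e * 1" using e n0 by (intro add_left_mono mult_left_mono) auto
    finally show "D powr p \<le> n * c' + e" by simp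
  qed
  have D0: "0 \<le> D" by (simp add: D_def)
  have "D = (D powr p) powr (1/p)" using p D0 by (simp add: powr_powr)
  also have "\<dots> \<le> (n * c') powr (1/p)" using Dp p by (intro powr_mono2) auto
  also have "\<dots> = n powr (1/p) * c' powr (1/p)" using n0 c'0 by (simp add: powr_mult)
  also have "\<dots> \<le> n powr (1/p) * W0" using cW by (intro mult_left_mono) (auto simp: c'_def)
  finally show ?thesis by (simp add: D_def n_def)
qed



lemma prob_integral_abs_le:
  fixes g :: "'a \<Rightarrow> real"
  assumes "prob_space M" "g \<in> borel_measurable M" "\<And>x. \<bar>g x\<bar> \<le> B"
  shows "\<bar>\<integral>x. g x \<partial>M\<bar> \<le> B"
proof -
  interpret prob_space M by fact
  have gi: "integrable M g" using assms by (intro integrable_const_bound[where B=B]) auto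
  have "\<bar>\<integral>x. g x \<partial>M\<bar> \<le> (\<integral>x. \<bar>g x\<bar> \<partial>M)" using integral_norm_bound[of M g] by simp
  also have "\<dots> \<le> (\<integral>x. B \<partial>M)" using gi assms(3) by (intro integral_mono) auto
  also have "\<dots> = B" using prob_space by simp
  finally show ?thesis .
qed

lemma cs_step:
  fixes X T :: real
  assumes "\<And>s. s > 0 \<Longrightarrow> X \<le> T / (2 * s) + s / 2" "0 \<le> T"
  shows "X \<le> sqrt T"
proof (cases "T = 0")
  case True
  have "X \<le> 0 + e" if "e > 0" for e using assms(1)[of "2 * e"] that True by simp
  then have "X \<le> 0" by (rule field_le_epsilon)
  then show ?thesis using True by simp
next
  case False
  then have s: "sqrt T > 0" using assms(2) by simp
  have "T / (2 * sqrt T) = sqrt T / 2" using s assms(2)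
    by (metis real_sqrt_pow2 power2_eq_square nonzero_mult_div_cancel_right times_divide_eq_right
        mult.commute divide_divide_eq_left less_irrefl)
  then show ?thesis using assms(1)[OF s] by simp
qed

lemma abs_le_sq: "\<bar>a::real\<bar> \<le> (a\<^sup>2 / s + s) / 2" if "s > 0" for s
proof -
  have "0 \<le> (\<bar>a\<bar> - s)\<^sup>2" by simp
  then have "2 * \<bar>a\<bar> * s \<le> a\<^sup>2 + s\<^sup>2" by (simp add: power2_eq_square algebra_simps)
  then show ?thesis using that by (simp add: field_simps power2_eq_square)
qed



theorem theorem2p5:
  fixes N :: nat and E :: "real set" and H :: "(nat \<Rightarrow> real) \<Rightarrow> real"
    and \<mu> :: "real \<Rightarrow> (nat \<Rightarrow> real) measure" and Z :: "real \<Rightarrow> real"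
    and \<beta> \<epsilon> p C :: real and I :: "nat set" and f :: "(nat \<Rightarrow> real) \<Rightarrow> real"
  assumes E_borel: "E \<in> sets borel"
    and H_meas: "H \<in> borel_measurable (Rn N)"
    and MC_prob: "\<forall>\<epsilon>'\<in>E. prob_space (\<mu> \<epsilon>')"
    and MC_sets: "\<forall>\<epsilon>'\<in>E. sets (\<mu> \<epsilon>') = sets (Rn N)"
    and MC_perm: "\<forall>\<epsilon>'\<in>E. perm_invariant N (\<mu> \<epsilon>')"
    and MC_support: "\<forall>\<epsilon>'\<in>E. AE \<phi> in \<mu> \<epsilon>'. H \<phi> = \<epsilon>' * real N"
    and MC_kernel: "\<mu> \<in> restrict_space borel E \<rightarrow>\<^sub>M subprob_algebra (Rn N)"
    and Z_nonneg: "\<forall>\<epsilon>'\<in>E. Z \<epsilon>' \<ge> 0"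
    and part_int: "set_integrable lborel E (canon_weight \<beta> N Z)"
    and part_pos: "canon_partition E \<beta> N Z > 0"
    and eps_E: "\<epsilon> \<in> E"
    and p_ge: "p \<ge> 1"
    and C_pos: "C > 0"
    and W_bound: "\<forall>\<epsilon>'\<in>E. wasserstein_p p (\<mu> \<epsilon>) (\<mu> \<epsilon>') N \<le> ennreal (C * \<bar>\<epsilon> - \<epsilon>'\<bar>)"
    and mom_MC: "\<forall>\<epsilon>'\<in>E. integrable (\<mu> \<epsilon>') (\<lambda>x. \<Sum>i<N. \<bar>x i\<bar> powr p)"
    and mom_C: "set_integrable lborel E
                  (\<lambda>\<epsilon>'. canon_weight \<beta> N Z \<epsilon>' * (\<integral>x. (\<Sum>i<N. \<bar>x i\<bar> powr p) \<partial>\<mu> \<epsilon>'))"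
    and H2_C: "set_integrable lborel E
                  (\<lambda>\<epsilon>'. canon_weight \<beta> N Z \<epsilon>' * (\<integral>x. (H x)\<^sup>2 \<partial>\<mu> \<epsilon>'))"
    and I_sub: "I \<subseteq> {..<N}"
    and I_card: "card I < N"
    and f_meas: "f \<in> borel_measurable (Rn (card I))"
    and f_bdd: "\<exists>B. \<forall>x. \<bar>f x\<bar> \<le> B"
    and f_lip: "\<forall>x\<in>space (Rn (card I)). \<forall>y\<in>space (Rn (card I)).
                  \<bar>f x - f y\<bar> \<le> lp_norm p (card I) (\<lambda>k. x k - y k)"
  shows "\<bar>(\<integral>\<phi>. f (proj_coords I \<phi>) \<partial>\<mu> \<epsilon>) - canon_exp E \<beta> N Z \<mu> (\<lambda>\<phi>. f (proj_coords I \<phi>))\<bar>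
         \<le> C * (real (card I) / (1 - real (card I) / real N)) powr (1 / p)
             * (sqrt ((canon_exp E \<beta> N Z \<mu> (\<lambda>\<phi>. (H \<phi>)\<^sup>2) - (canon_exp E \<beta> N Z \<mu> H)\<^sup>2) / (real N)\<^sup>2)
                + \<bar>\<epsilon> - canon_exp E \<beta> N Z \<mu> H / real N\<bar>)"
proof -
  define Ml where "Ml = restrict_space lborel E"
  have EL: "E \<inter> space lborel \<in> sets lborel" using E_borel by simp
  have spMl: "space Ml = E" by (simp add: Ml_def space_restrict_space)
  have si: "set_integrable lborel E h \<longleftrightarrow> integrable Ml h" for h :: "real \<Rightarrow> real"
    unfolding set_integrable_def Ml_def using integrable_restrict_space[OF EL, of h] by simp
  have sI: "(LINT x:E|lborel. h x) = integral\<^sup>L Ml h" for h :: "real \<Rightarrow> real"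
    unfolding set_lebesgue_integral_def Ml_def using integral_restrict_space[OF EL, of h] by simp
  have N0: "0 < N" using I_card by simp
  define w where "w = canon_weight \<beta> N Z"
  have w0: "0 \<le> w x" if "x \<in> E" for x using Z_nonneg that by (simp add: w_def canon_weight_def)
  define Zc where "Zc = canon_partition E \<beta> N Z"
  have Zc: "Zc = integral\<^sup>L Ml w" by (simp add: Zc_def canon_partition_def sI w_def)
  have Zc0: "0 < Zc" using part_pos by (simp add: Zc_def)
  have wi: "integrable Ml w" using part_int si by (simp add: w_def)
  have wm: "w \<in> borel_measurable Ml" using wi by auto
  have idm: "(\<lambda>x. x) \<in> borel_measurable Ml" unfolding Ml_def
    by (rule measurable_restrict_space1) simp
  have Hm: "H \<in> borel_measurable (\<mu> x)" if "x \<in> E" for x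
    by (subst measurable_cong_sets[OF MC_sets[rule_format, OF that] refl]) (rule H_meas)
  have HE: "(\<integral>\<phi>. H \<phi> \<partial>\<mu> x) = x * real N" if x: "x \<in> E" for x
  proof -
    interpret prob_space "\<mu> x" using MC_prob x by simp
    have "(\<integral>\<phi>. H \<phi> \<partial>\<mu> x) = (\<integral>\<phi>. x * real N \<partial>\<mu> x)"
      using MC_support x Hm[OF x] by (intro integral_cong_AE) auto
    then show ?thesis using prob_space by simp
  qed
  have H2E: "(\<integral>\<phi>. (H \<phi>)\<^sup>2 \<partial>\<mu> x) = (x * real N)\<^sup>2" if x: "x \<in> E" for x
  proof -
    interpret prob_space "\<mu> x" using MC_prob x by simp
    have "(\<integral>\<phi>. (H \<phi>)\<^sup>2 \<partial>\<mu> x) = (\<integral>\<phi>. (x * real N)\<^sup>2 \<partial>\<mu> x)"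
      using MC_support x Hm[OF x] by (intro integral_cong_AE) auto
    then show ?thesis using prob_space by simp
  qed
  have "integrable Ml (\<lambda>x. w x * (\<integral>\<phi>. (H \<phi>)\<^sup>2 \<partial>\<mu> x))" using H2_C si by (simp add: w_def)
  moreover have "integrable Ml (\<lambda>x. w x * (x * real N)\<^sup>2) \<longleftrightarrow> integrable Ml (\<lambda>x. w x * (\<integral>\<phi>. (H \<phi>)\<^sup>2 \<partial>\<mu> x))"
    by (rule Bochner_Integration.integrable_cong) (auto simp: spMl H2E)
  ultimately have "integrable Ml (\<lambda>x. w x * (x * real N)\<^sup>2)" by simp
  then have "integrable Ml (\<lambda>x. w x * (x * real N)\<^sup>2 / (real N)\<^sup>2)" by simp
  moreover have "(\<lambda>x. w x * (x * real N)\<^sup>2 / (real N)\<^sup>2) = (\<lambda>x. w x * x\<^sup>2)"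
    using N0 by (simp add: fun_eq_iff power_mult_distrib)
  ultimately have w2i: "integrable Ml (\<lambda>x. w x * x\<^sup>2)" by simp
  have w1i: "integrable Ml (\<lambda>x. w x * x)"
  proof (rule Bochner_Integration.integrable_bound[of _ "\<lambda>x. w x + w x * x\<^sup>2"])
    show "integrable Ml (\<lambda>x. w x + w x * x\<^sup>2)" using wi w2i by simp
    show "(\<lambda>x. w x * x) \<in> borel_measurable Ml" using wm idm by (rule borel_measurable_times)
    show "AE x in Ml. norm (w x * x) \<le> norm (w x + w x * x\<^sup>2)"
    proof (rule AE_I2)
      fix x assume "x \<in> space Ml"
      then have "0 \<le> w x" using w0 spMl by auto
      moreover have "\<bar>x\<bar> \<le> 1 + x\<^sup>2" using abs_le_sq[of 1 x] by simp
      ultimately have "w x * \<bar>x\<bar> \<le> w x + w x * x\<^sup>2"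
        using mult_left_mono[of "\<bar>x\<bar>" "1 + x\<^sup>2" "w x"] by (simp add: distrib_left)
      moreover have "0 \<le> w x + w x * x\<^sup>2" using \<open>0 \<le> w x\<close> by simp
      ultimately show "norm (w x * x) \<le> norm (w x + w x * x\<^sup>2)"
        using \<open>0 \<le> w x\<close> by (simp add: abs_mult)
    qed
  qed
  define m1 where "m1 = integral\<^sup>L Ml (\<lambda>x. w x * x) / Zc"
  define m2 where "m2 = integral\<^sup>L Ml (\<lambda>x. w x * x\<^sup>2) / Zc"
  have cH: "canon_exp E \<beta> N Z \<mu> H = real N * m1"
  proof -
    have "(LINT x:E|lborel. canon_weight \<beta> N Z x * (\<integral>\<phi>. H \<phi> \<partial>\<mu> x)) = integral\<^sup>L Ml (\<lambda>x. w x * (x * real N))"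
      unfolding sI w_def by (intro Bochner_Integration.integral_cong) (auto simp: spMl HE)
    also have "\<dots> = integral\<^sup>L Ml (\<lambda>x. real N * (w x * x))"
      by (intro Bochner_Integration.integral_cong) (auto simp: algebra_simps)
    also have "\<dots> = real N * integral\<^sup>L Ml (\<lambda>x. w x * x)"
      by (rule integral_mult_right_zero)
    finally show ?thesis by (simp add: canon_exp_def m1_def Zc_def[symmetric])
  qed
  have cH2: "canon_exp E \<beta> N Z \<mu> (\<lambda>\<phi>. (H \<phi>)\<^sup>2) = (real N)\<^sup>2 * m2"
  proof -
    have "(LINT x:E|lborel. canon_weight \<beta> N Z x * (\<integral>\<phi>. (H \<phi>)\<^sup>2 \<partial>\<mu> x)) = integral\<^sup>L Ml (\<lambda>x. (real N)\<^sup>2 * (w x * x\<^sup>2))"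
      unfolding sI w_def by (intro Bochner_Integration.integral_cong) (auto simp: spMl H2E power_mult_distrib)
    also have "\<dots> = (real N)\<^sup>2 * integral\<^sup>L Ml (\<lambda>x. w x * x\<^sup>2)" by simp
    finally show ?thesis by (simp add: canon_exp_def m2_def Zc_def[symmetric])
  qed
  have Tf: "integral\<^sup>L Ml (\<lambda>x. w x * (y - x)\<^sup>2) / Zc = (m2 - m1\<^sup>2) + (y - m1)\<^sup>2"
     "integrable Ml (\<lambda>x. w x * (y - x)\<^sup>2)" for y
  proof -
    have e: "(\<lambda>x. w x * (y - x)\<^sup>2) = (\<lambda>x. y\<^sup>2 * w x - 2 * y * (w x * x) + w x * x\<^sup>2)"
      by (simp add: fun_eq_iff power2_eq_square algebra_simps)
    show "integrable Ml (\<lambda>x. w x * (y - x)\<^sup>2)" unfolding e using wi w1i w2i by simp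
    have eq: "integral\<^sup>L Ml (\<lambda>x. w x * (y - x)\<^sup>2) = y\<^sup>2 * Zc - 2 * y * integral\<^sup>L Ml (\<lambda>x. w x * x) + integral\<^sup>L Ml (\<lambda>x. w x * x\<^sup>2)"
      unfolding e Zc using wi w1i w2i by simp
    have alg: "(y\<^sup>2 * c - 2 * y * a + b) / c = (b / c - (a / c)\<^sup>2) + (y - a / c)\<^sup>2" if "0 < c" for a b c :: real
      using that by (simp add: field_simps power2_eq_square)
    show "integral\<^sup>L Ml (\<lambda>x. w x * (y - x)\<^sup>2) / Zc = (m2 - m1\<^sup>2) + (y - m1)\<^sup>2"
      unfolding eq m1_def m2_def by (rule alg[OF Zc0])
  qed
  have Tnn: "0 \<le> integral\<^sup>L Ml (\<lambda>x. w x * (y - x)\<^sup>2) / Zc" for y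
    using Zc0 w0 spMl by (intro divide_nonneg_pos integral_nonneg) auto
  have var0: "0 \<le> m2 - m1\<^sup>2" using Tnn[of m1] Tf(1)[of m1] by simp
  define T where "T = integral\<^sup>L Ml (\<lambda>x. w x * (\<epsilon> - x)\<^sup>2) / Zc"
  have T0: "0 \<le> T" using Tnn by (simp add: T_def)
  have wai: "integrable Ml (\<lambda>x. w x * \<bar>\<epsilon> - x\<bar>)"
  proof (rule Bochner_Integration.integrable_bound[of _ "\<lambda>x. w x + w x * (\<epsilon> - x)\<^sup>2"])
    show "integrable Ml (\<lambda>x. w x + w x * (\<epsilon> - x)\<^sup>2)" using wi Tf(2) by simp
    show "(\<lambda>x. w x * \<bar>\<epsilon> - x\<bar>) \<in> borel_measurable Ml" using wm idm by measurable
    show "AE x in Ml. norm (w x * \<bar>\<epsilon> - x\<bar>) \<le> norm (w x + w x * (\<epsilon> - x)\<^sup>2)"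
    proof (rule AE_I2)
      fix x assume "x \<in> space Ml"
      then have w: "0 \<le> w x" using w0 spMl by auto
      have "\<bar>\<epsilon> - x\<bar> * 2 \<le> (\<epsilon> - x)\<^sup>2 + 1" using abs_le_sq[of 1 "\<epsilon> - x"] by simp
      then have "\<bar>\<epsilon> - x\<bar> \<le> 1 + (\<epsilon> - x)\<^sup>2" using abs_ge_zero[of "\<epsilon> - x"] by (smt (verit))
      then have "w x * \<bar>\<epsilon> - x\<bar> \<le> w x * (1 + (\<epsilon> - x)\<^sup>2)" using w by (rule mult_left_mono)
      then show "norm (w x * \<bar>\<epsilon> - x\<bar>) \<le> norm (w x + w x * (\<epsilon> - x)\<^sup>2)"
        using w by (simp add: abs_mult distrib_left)
    qed
  qed
  have Xle: "integral\<^sup>L Ml (\<lambda>x. w x * \<bar>\<epsilon> - x\<bar>) / Zc \<le> sqrt T"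
  proof (rule cs_step[OF _ T0])
    fix s :: real assume s: "0 < s"
    have "integral\<^sup>L Ml (\<lambda>x. w x * \<bar>\<epsilon> - x\<bar>) \<le> integral\<^sup>L Ml (\<lambda>x. w x * (((\<epsilon> - x)\<^sup>2 / s + s) / 2))"
    proof (rule integral_mono[OF wai])
      have e: "(\<lambda>x. w x * (((\<epsilon> - x)\<^sup>2 / s + s) / 2)) = (\<lambda>x. (w x * (\<epsilon> - x)\<^sup>2) / (2 * s) + (s / 2) * w x)"
        using s by (simp add: fun_eq_iff field_simps)
      show "integrable Ml (\<lambda>x. w x * (((\<epsilon> - x)\<^sup>2 / s + s) / 2))" unfolding e using Tf(2) wi by simp
      fix x assume "x \<in> space Ml"
      then have "0 \<le> w x" using w0 spMl by auto
      then show "w x * \<bar>\<epsilon> - x\<bar> \<le> w x * (((\<epsilon> - x)\<^sup>2 / s + s) / 2)"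
        using abs_le_sq[OF s, of "\<epsilon> - x"] by (rule mult_left_mono[rotated])
    qed
    also have "\<dots> = integral\<^sup>L Ml (\<lambda>x. (w x * (\<epsilon> - x)\<^sup>2) / (2 * s) + (s / 2) * w x)"
      using s by (intro Bochner_Integration.integral_cong) (auto simp: field_simps)
    also have "\<dots> = integral\<^sup>L Ml (\<lambda>x. w x * (\<epsilon> - x)\<^sup>2) / (2 * s) + (s / 2) * Zc"
      using Tf(2) wi Zc by simp
    finally show "integral\<^sup>L Ml (\<lambda>x. w x * \<bar>\<epsilon> - x\<bar>) / Zc \<le> T / (2 * s) + s / 2"
      using Zc0 s by (simp add: T_def divide_simps)
  qed
  have sqT: "sqrt T \<le> sqrt (m2 - m1\<^sup>2) + \<bar>\<epsilon> - m1\<bar>"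
  proof -
    have "T = (m2 - m1\<^sup>2) + (\<epsilon> - m1)\<^sup>2" using Tf(1) by (simp add: T_def)
    then have "sqrt T \<le> sqrt (m2 - m1\<^sup>2) + sqrt ((\<epsilon> - m1)\<^sup>2)"
      using var0 sqrt_add_le_add_sqrt[of "m2 - m1\<^sup>2" "(\<epsilon> - m1)\<^sup>2"] by simp
    then show ?thesis by simp
  qed
  define g where "g \<phi> = f (proj_coords I \<phi>)" for \<phi>
  define G where "G x = (\<integral>\<phi>. g \<phi> \<partial>\<mu> x)" for x
  obtain B where B: "\<And>x. \<bar>f x\<bar> \<le> B" using f_bdd by blast
  have gmR: "g \<in> borel_measurable (Rn N)"
    unfolding g_def using measurable_compose[OF proj_meas[OF I_sub] f_meas] .
  have Gm: "G \<in> borel_measurable Ml"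
  proof -
    have "(\<lambda>x. integral\<^sup>L (\<mu> x) g) \<in> restrict_space borel E \<rightarrow>\<^sub>M borel"
      using measurable_compose[OF MC_kernel integral_measurable_subprob_algebra[OF gmR]] .
    moreover have "sets Ml = sets (restrict_space borel E)"
      unfolding Ml_def by (rule sets_restrict_space_cong) simp
    ultimately show ?thesis unfolding G_def using measurable_cong_sets by blast
  qed
  have GB: "\<bar>G x\<bar> \<le> B" if "x \<in> E" for x
    unfolding G_def
  proof (rule prob_integral_abs_le)
    show "prob_space (\<mu> x)" using MC_prob that by simp
    show "g \<in> borel_measurable (\<mu> x)"
      by (subst measurable_cong_sets[OF MC_sets[rule_format, OF that] refl]) (rule gmR)
    show "\<bar>g y\<bar> \<le> B" for y using B by (simp add: g_def)
  qed
  have wGi: "integrable Ml (\<lambda>x. w x * G x)"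
  proof (rule Bochner_Integration.integrable_bound[of _ "\<lambda>x. B * w x"])
    show "integrable Ml (\<lambda>x. B * w x)" using wi by simp
    show "(\<lambda>x. w x * G x) \<in> borel_measurable Ml" using wm Gm by (rule borel_measurable_times)
    show "AE x in Ml. norm (w x * G x) \<le> norm (B * w x)"
    proof (rule AE_I2)
      fix x assume "x \<in> space Ml"
      then have x: "x \<in> E" using spMl by auto
      have "\<bar>w x * G x\<bar> \<le> w x * B" using w0[OF x] GB[OF x] by (simp add: abs_mult mult_left_mono)
      also have "\<dots> \<le> \<bar>B * w x\<bar>" by (simp add: mult.commute)
      finally show "norm (w x * G x) \<le> norm (B * w x)" by simp
    qed
  qed
  have cg: "canon_exp E \<beta> N Z \<mu> g = integral\<^sup>L Ml (\<lambda>x. w x * G x) / Zc"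
    by (simp add: canon_exp_def sI w_def G_def Zc_def)
  define K0 where "K0 = real (card I) powr (1/p)"
  define K where "K = (real (card I) / (1 - real (card I) / real N)) powr (1 / p)"
  have K00: "0 \<le> K0" by (simp add: K0_def)
  have K0K: "K0 \<le> K"
  proof -
    have q: "0 < 1 - real (card I) / real N" "1 - real (card I) / real N \<le> 1"
      using I_card N0 by (auto simp: field_simps)
    have "real (card I) \<le> real (card I) / (1 - real (card I) / real N)"
      using q by (simp add: le_divide_eq mult_left_le)
    then show ?thesis unfolding K0_def K_def using p_ge by (intro powr_mono2) auto
  qed
  have ptA: "\<bar>G \<epsilon> - G x\<bar> \<le> K0 * (C * \<bar>\<epsilon> - x\<bar>)" if x: "x \<in> E" for x
    unfolding G_def g_def K0_def
  proof (rule lemmaA[OF N0 p_ge _ _ _ _ _ _ I_sub f_meas B f_lip])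
    show "sets (\<mu> \<epsilon>) = sets (Rn N)" "sets (\<mu> x) = sets (Rn N)" using MC_sets eps_E x by auto
    show "perm_invariant N (\<mu> \<epsilon>)" "perm_invariant N (\<mu> x)" using MC_perm eps_E x by auto
    show "prob_space (\<mu> \<epsilon>)" "prob_space (\<mu> x)" using MC_prob eps_E x by auto
    show "wasserstein_p p (\<mu> \<epsilon>) (\<mu> x) N \<le> ennreal (C * \<bar>\<epsilon> - x\<bar>)" using W_bound x by auto
    show "0 \<le> C * \<bar>\<epsilon> - x\<bar>" using C_pos by simp
  qed
  have dint: "integrable Ml (\<lambda>x. w x * (G \<epsilon> - G x))"
  proof -
    have e: "(\<lambda>x. w x * (G \<epsilon> - G x)) = (\<lambda>x. G \<epsilon> * w x - w x * G x)" by (simp add: fun_eq_iff algebra_simps)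
    show ?thesis unfolding e using wi wGi by simp
  qed
  have "G \<epsilon> - canon_exp E \<beta> N Z \<mu> g = integral\<^sup>L Ml (\<lambda>x. w x * (G \<epsilon> - G x)) / Zc"
  proof -
    have e: "(\<lambda>x. w x * (G \<epsilon> - G x)) = (\<lambda>x. G \<epsilon> * w x - w x * G x)" by (simp add: fun_eq_iff algebra_simps)
    have "integral\<^sup>L Ml (\<lambda>x. w x * (G \<epsilon> - G x)) = G \<epsilon> * Zc - integral\<^sup>L Ml (\<lambda>x. w x * G x)"
      unfolding e Zc using wi wGi by simp
    then show ?thesis using Zc0 cg by (simp add: field_simps)
  qed
  note diffeq = this
  have num: "\<bar>integral\<^sup>L Ml (\<lambda>x. w x * (G \<epsilon> - G x))\<bar> \<le> K0 * C * integral\<^sup>L Ml (\<lambda>x. w x * \<bar>\<epsilon> - x\<bar>)"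
  proof -
    have "\<bar>integral\<^sup>L Ml (\<lambda>x. w x * (G \<epsilon> - G x))\<bar> \<le> integral\<^sup>L Ml (\<lambda>x. \<bar>w x * (G \<epsilon> - G x)\<bar>)"
      using integral_norm_bound[of Ml "\<lambda>x. w x * (G \<epsilon> - G x)"] by simp
    also have "\<dots> \<le> integral\<^sup>L Ml (\<lambda>x. K0 * C * (w x * \<bar>\<epsilon> - x\<bar>))"
    proof (rule integral_mono)
      show "integrable Ml (\<lambda>x. \<bar>w x * (G \<epsilon> - G x)\<bar>)" using dint by simp
      show "integrable Ml (\<lambda>x. K0 * C * (w x * \<bar>\<epsilon> - x\<bar>))" using wai by simp
      fix x assume "x \<in> space Ml"
      then have x: "x \<in> E" using spMl by auto
      have "\<bar>w x * (G \<epsilon> - G x)\<bar> = w x * \<bar>G \<epsilon> - G x\<bar>" using w0[OF x] by (simp add: abs_mult)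
      also have "\<dots> \<le> w x * (K0 * (C * \<bar>\<epsilon> - x\<bar>))" using ptA[OF x] w0[OF x] by (rule mult_left_mono)
      finally show "\<bar>w x * (G \<epsilon> - G x)\<bar> \<le> K0 * C * (w x * \<bar>\<epsilon> - x\<bar>)" by (simp add: algebra_simps)
    qed
    also have "\<dots> = K0 * C * integral\<^sup>L Ml (\<lambda>x. w x * \<bar>\<epsilon> - x\<bar>)" by simp
    finally show ?thesis .
  qed
  have KC0: "0 \<le> K0 * C" using K00 C_pos by simp
  have "\<bar>G \<epsilon> - canon_exp E \<beta> N Z \<mu> g\<bar> = \<bar>integral\<^sup>L Ml (\<lambda>x. w x * (G \<epsilon> - G x))\<bar> / Zc"
    using Zc0 diffeq by simp
  also have "\<dots> \<le> K0 * C * (integral\<^sup>L Ml (\<lambda>x. w x * \<bar>\<epsilon> - x\<bar>) / Zc)"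
    using num Zc0 by (simp add: divide_right_mono)
  also have "\<dots> \<le> K0 * C * sqrt T" using Xle KC0 by (rule mult_left_mono)
  also have "\<dots> \<le> K0 * C * (sqrt (m2 - m1\<^sup>2) + \<bar>\<epsilon> - m1\<bar>)" using sqT KC0 by (rule mult_left_mono)
  also have "\<dots> \<le> C * K * (sqrt (m2 - m1\<^sup>2) + \<bar>\<epsilon> - m1\<bar>)"
    using K0K C_pos var0 by (intro mult_right_mono) auto
  also have "\<dots> = C * K * (sqrt (((real N)\<^sup>2 * m2 - (real N * m1)\<^sup>2) / (real N)\<^sup>2) + \<bar>\<epsilon> - real N * m1 / real N\<bar>)"
    using N0 by (simp add: power_mult_distrib right_diff_distrib[symmetric])
  finally show ?thesis unfolding cH cH2 K_def G_def g_def by simp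
qed


end
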